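(* Let $G$ be a group in which every non-abelian subgroup $H$ satisfies $C_G(H)\le H$, and let $N$ be a finite normal subgroup of $G$. Then $C_G(N)$ contains every element of $G$ of infinite order.
   Context: $C_G(H)$ denotes the centralizer of $H$ in $G$. *)

theory Defs
  imports "HOL-Algebra.Algebra"
begin

definition centralizer :: "('a, 'b) monoid_scheme \<Rightarrow> 'a set \<Rightarrow> 'a set" where
  "centralizer G H = {g \<in> carrier G. \<forall>h\<in>H. g \<otimes>\<^bsub>G\<^esub> h = h \<otimes>\<^bsub>G\<^esub> g}"

end

theory Submission
  imports Defs
begin

lemma (in group) pow_in_finite_zero:
  assumes g: "g \<in> carrier G" and o: "ord g = 0" and N: "subgroup N G" "finite N"
    and j: "g [^] (j::int) \<in> N"
  shows "j = 0"
proof (rule ccontr)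
  assume j0: "j \<noteq> 0"
  define f where "f = (\<lambda>k::nat. g [^] (j * int k))"
  have "inj f"
  proof (rule injI)
    fix a b assume "f a = f b"
    then have "int (ord g) dvd (j * int b - j * int a)" using int_pow_eq[OF g] f_def by metis
    then have "j * int b = j * int a" using o by simp
    then show "a = b" using j0 by simp
  qed
  moreover have "f ` UNIV \<subseteq> N"
  proof
    fix y assume "y \<in> f ` UNIV"
    then obtain k where "y = f k" by auto
    then have "y = (g [^] j) [^] (int k)" using int_pow_pow[OF g] f_def by simp
    then show "y \<in> N" using subgroup_int_pow_closed[OF N(1) j] by simp
  qed
  ultimately have "finite (UNIV :: nat set)"
    using N(2) finite_imageD finite_subset by metis
  then show False by simp
qed

lemma (in group) exists_central_power:
  assumes g: "g \<in> carrier G" and N: "N \<lhd> G" "finite N"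
  shows "\<exists>d::nat. d > 0 \<and> (\<forall>x\<in>N. g [^] d \<otimes> x = x \<otimes> g [^] d)"
proof -
  define f where "f = (\<lambda>k::nat. restrict (\<lambda>x. g [^] k \<otimes> x \<otimes> inv (g [^] k)) N)"
  have Nc: "N \<subseteq> carrier G" using N(1) normal_imp_subgroup subgroup.subset by blast
  have "f ` UNIV \<subseteq> N \<rightarrow>\<^sub>E N"
    using normal.inv_op_closed2[OF N(1)] g by (auto simp: f_def)
  moreover have "finite (N \<rightarrow>\<^sub>E N)" using N(2) by (simp add: finite_PiE)
  ultimately have "\<not> inj f"
    using finite_imageD finite_subset infinite_UNIV_nat by metis
  then obtain a b where ab: "a \<noteq> b" "f a = f b" unfolding inj_def by blast
  have key: "\<And>a b. a < b \<Longrightarrow> f a = f b \<Longrightarrow> \<exists>d::nat. d > 0 \<and> (\<forall>x\<in>N. g [^] d \<otimes> x = x \<otimes> g [^] d)"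
  proof -
    fix a b :: nat assume lt: "a < b" and eq: "f a = f b"
    define d where "d = b - a"
    have bd: "b = a + d" using lt d_def by simp
    show "\<exists>d::nat. d > 0 \<and> (\<forall>x\<in>N. g [^] d \<otimes> x = x \<otimes> g [^] d)"
    proof (intro exI conjI ballI)
      show "d > 0" using lt d_def by simp
      fix x assume x: "x \<in> N"
      then have xc: "x \<in> carrier G" using Nc by auto
      have "g [^] a \<otimes> x \<otimes> inv (g [^] a) = g [^] b \<otimes> x \<otimes> inv (g [^] b)"
        using fun_cong[OF eq, of x] x by (simp add: f_def)
      also have "\<dots> = g [^] a \<otimes> (g [^] d \<otimes> x \<otimes> inv (g [^] d)) \<otimes> inv (g [^] a)"
        using g xc by (simp add: bd nat_pow_mult[symmetric] inv_mult_group m_assoc)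
      finally have "x \<otimes> inv (g [^] a) = (g [^] d \<otimes> x \<otimes> inv (g [^] d)) \<otimes> inv (g [^] a)"
        using g xc by (simp add: m_assoc)
      then have "x = g [^] d \<otimes> x \<otimes> inv (g [^] d)"
        using g xc by (simp add: right_cancel)
      then have "x \<otimes> g [^] d = g [^] d \<otimes> x \<otimes> inv (g [^] d) \<otimes> g [^] d" by simp
      also have "\<dots> = g [^] d \<otimes> x" using g xc by (simp add: m_assoc)
      finally show "g [^] d \<otimes> x = x \<otimes> g [^] d" by simp
    qed
  qed
  show ?thesis
  proof (cases "a < b")
    case True then show ?thesis using key ab by blast
  next
    case False then have "b < a" using ab by simp
    then show ?thesis using key ab by metis
  qed
qed

lemma (in group) main_aux:
  assumes hyp: "\<And>H. \<lbrakk>subgroup H G; \<not> (\<forall>x\<in>H. \<forall>y\<in>H. x \<otimes> y = y \<otimes> x)\<rbrakk>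
           \<Longrightarrow> centralizer G H \<subseteq> H"
    and N: "N \<lhd> G" "finite N" and g: "g \<in> carrier G" and o: "ord g = 0"
  shows "g \<in> centralizer G N"
proof (rule ccontr)
  assume nc: "g \<notin> centralizer G N"
  then obtain x where x: "x \<in> N" and gx: "g \<otimes> x \<noteq> x \<otimes> g"
    using g unfolding centralizer_def by auto
  have NS: "subgroup N G" using N(1) normal_imp_subgroup by blast
  have Nc: "N \<subseteq> carrier G" using NS subgroup.subset by blast
  obtain m :: nat where m: "m > 0" "\<forall>y\<in>N. g [^] m \<otimes> y = y \<otimes> g [^] m"
    using exists_central_power[OF g N] by blast
  define c where "c = g [^] (int m)"
  have cc: "c \<in> carrier G" using g c_def by simp
  have cN: "\<And>y. y \<in> N \<Longrightarrow> c \<otimes> y = y \<otimes> c" using m(2) by (simp add: c_def int_pow_int)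
  define p :: int where "p = int m + 1"
  define H where "H = {n \<otimes> g [^] (p * k) | n k. n \<in> N}"
  have pw: "\<And>a b. g [^] (a::int) \<otimes> g [^] b = g [^] (a + b)" using g int_pow_mult by simp
  have Hc: "H \<subseteq> carrier G" using Nc g unfolding H_def by auto
  have sub: "subgroup H G"
  proof (rule subgroupI)
    show "H \<subseteq> carrier G" by (rule Hc)
    have "\<one> \<otimes> g [^] (p * 0) \<in> H" unfolding H_def using NS subgroup.one_closed by blast
    then show "H \<noteq> {}" by blast
  next
    fix a assume "a \<in> H"
    then obtain n k where a: "a = n \<otimes> g [^] (p * k)" "n \<in> N" unfolding H_def by blast
    define y where "y = g [^] (p * k)"
    have yc: "y \<in> carrier G" using g y_def by simp
    have nc: "n \<in> carrier G" using a Nc by auto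
    have iy: "inv y = g [^] (p * (- k))" using g by (simp add: y_def int_pow_neg)
    have a': "a = n \<otimes> y" by (simp add: a y_def)
    have "inv a = inv y \<otimes> inv n" using nc yc by (simp add: a' inv_mult_group)
    also have "\<dots> = (inv y \<otimes> inv n \<otimes> y) \<otimes> inv y" using nc yc by (simp add: m_assoc)
    finally have "inv a = (inv y \<otimes> inv n \<otimes> y) \<otimes> inv y" .
    moreover have "inv y \<otimes> inv n \<otimes> y \<in> N"
      using normal.inv_op_closed1[OF N(1) yc subgroup.m_inv_closed[OF NS a(2)]] by simp
    ultimately show "inv a \<in> H" unfolding H_def iy by blast
  next
    fix a b assume "a \<in> H" "b \<in> H"
    then obtain n k n' k' where a: "a = n \<otimes> g [^] (p * k)" "n \<in> N"
      and b: "b = n' \<otimes> g [^] (p * k')" "n' \<in> N" unfolding H_def by blast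
    define y where "y = g [^] (p * k)"
    have yc: "y \<in> carrier G" using g y_def by simp
    have nc: "n \<in> carrier G" "n' \<in> carrier G" using a b Nc by auto
    have a': "a = n \<otimes> y" by (simp add: a y_def)
    have "a \<otimes> b = (n \<otimes> (y \<otimes> n' \<otimes> inv y)) \<otimes> (y \<otimes> g [^] (p * k'))"
      using yc nc g by (simp add: a' b m_assoc l_inv_ex m_assoc[symmetric, of "inv y" y])
    also have "y \<otimes> g [^] (p * k') = g [^] (p * (k + k'))"
      by (simp add: y_def pw distrib_left)
    finally have "a \<otimes> b = (n \<otimes> (y \<otimes> n' \<otimes> inv y)) \<otimes> g [^] (p * (k + k'))" .
    moreover have "n \<otimes> (y \<otimes> n' \<otimes> inv y) \<in> N"
      using subgroup.m_closed[OF NS a(2) normal.inv_op_closed2[OF N(1) yc b(2)]] .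
    ultimately show "a \<otimes> b \<in> H" unfolding H_def by blast
  qed
  have xH: "x \<in> H"
  proof -
    have "x \<otimes> g [^] (p * 0) \<in> H" unfolding H_def using x by blast
    then show ?thesis using x Nc by auto
  qed
  have gpH: "g [^] p \<in> H"
  proof -
    have "\<one> \<otimes> g [^] (p * 1) \<in> H" unfolding H_def using NS subgroup.one_closed by blast
    then show ?thesis using g by simp
  qed
  have gp: "g [^] p = g \<otimes> c" using pw[of 1 "int m"] g by (simp add: p_def c_def add.commute)
  have xc: "x \<in> carrier G" using x Nc by auto
  have "g [^] p \<otimes> x \<noteq> x \<otimes> g [^] p"
  proof
    assume "g [^] p \<otimes> x = x \<otimes> g [^] p"
    then have "g \<otimes> x \<otimes> c = x \<otimes> g \<otimes> c"
      using cN[OF x] g cc xc by (simp add: gp m_assoc)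
    then show False using gx g cc xc by (simp add: right_cancel)
  qed
  then have nab: "\<not> (\<forall>u\<in>H. \<forall>v\<in>H. u \<otimes> v = v \<otimes> u)" using xH gpH by blast
  have "c \<in> centralizer G H"
    unfolding centralizer_def
  proof (intro CollectI conjI ballI)
    show "c \<in> carrier G" by (rule cc)
    fix h assume "h \<in> H"
    then obtain n k where h: "h = n \<otimes> g [^] (p * k)" "n \<in> N" unfolding H_def by blast
    have nc: "n \<in> carrier G" using h Nc by auto
    have "c \<otimes> g [^] (p * k) = g [^] (p * k) \<otimes> c"
      by (simp add: c_def pw add.commute)
    then show "c \<otimes> h = h \<otimes> c"
      using cN[OF h(2)] nc cc g by (simp add: h m_assoc[symmetric]) (simp add: m_assoc)
  qed
  then have "c \<in> H" using hyp[OF sub nab] by blast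
  then obtain n k where ck: "c = n \<otimes> g [^] (p * k)" "n \<in> N" unfolding H_def by blast
  have nc: "n \<in> carrier G" using ck Nc by auto
  have "n = c \<otimes> inv (g [^] (p * k))"
    using ck nc g by (simp add: m_assoc)
  also have "\<dots> = g [^] (int m - p * k)"
    using g by (simp add: c_def int_pow_neg[symmetric] pw)
  finally have "g [^] (int m - p * k) \<in> N" using ck by simp
  then have "int m - p * k = 0" by (rule pow_in_finite_zero[OF g o NS N(2)])
  then have e: "int m = p * k" by simp
  show False
  proof (cases "k \<le> 0")
    case True
    have p0: "p \<ge> 0" unfolding p_def by simp
    have "p * k \<le> 0" by (rule mult_nonneg_nonpos[OF p0 True])
    then show False using e m(1) by linarith
  next
    case False
    then have k1: "k \<ge> 1" by simp
    have p0: "p \<ge> 0" unfolding p_def by simp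
    have "p * 1 \<le> p * k" by (rule mult_left_mono[OF k1 p0])
    then have "p \<le> p * k" by simp
    moreover have "p = int m + 1" by (rule p_def)
    ultimately show False using e by linarith
  qed
qed

theorem lemma2p4:
  fixes G (structure) and N :: "'a set"
  assumes "group G"
    and "\<And>H. \<lbrakk>subgroup H G; \<not> (\<forall>x\<in>H. \<forall>y\<in>H. x \<otimes> y = y \<otimes> x)\<rbrakk>
           \<Longrightarrow> centralizer G H \<subseteq> H"
    and "N \<lhd> G" and "finite N"
  shows "{g \<in> carrier G. group.ord G g = 0} \<subseteq> centralizer G N"
  using group.main_aux[OF assms(1) assms(2) assms(3) assms(4)] by blast

end
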